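(* Consider the network of weakly, diffusively coupled scalar nodes \[ \dot x_i = a_ix_i^3(1-x_i)+\varepsilon\sum_{j=1}^N w_{ij}(x_j-x_i),\qquad i=1,\ldots,N, \] where $\varepsilon>0$, $a_i\neq 0$, $w_{ij}\in\mathbb{R}$, $w_{ii}=0$ for all $i$, and initial conditions satisfy $x_i(0)\in(0,1)$. If $a_i<0$ and $w_{ij}\geq 0$ for all $i,j=1,\ldots,N$, and the underlying digraph is strongly connected, then the origin (which is a nilpotent equilibrium for $\varepsilon=0$) is locally asymptotically stable for $\varepsilon>0$ sufficiently small.
   Context: The underlying digraph of the system has vertex set $\{1,\dots,N\}$ and a directed edge between $j$ and $i$ whenever $w_{ij}\neq0$; it is strongly connected if every vertex can be reached from every other vertex by a directed path. An equilibrium is nilpotent if all eigenvalues of the Jacobian there are zero. *)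

theory Defs
  imports "HOL-Analysis.Analysis"
begin

definition node_field :: "real^'n \<Rightarrow> real^'n^'n \<Rightarrow> real \<Rightarrow> real^'n \<Rightarrow> real^'n" where
  "node_field a w \<epsilon> x =
     (\<chi> i. a$i * (x$i)^3 * (1 - x$i) + \<epsilon> * (\<Sum>j\<in>UNIV. w$i$j * (x$j - x$i)))"

definition digraph_edges :: "real^'n^'n \<Rightarrow> ('n \<times> 'n) set" where
  "digraph_edges w = {(j, i). w$i$j \<noteq> 0}"

definition strongly_connected :: "real^'n^'n \<Rightarrow> bool" where
  "strongly_connected w \<longleftrightarrow> (\<forall>u v. (u, v) \<in> (digraph_edges w)\<^sup>*)"

text \<open>x solves x' = f(x) on the interval T (one-sided derivatives at endpoints).\<close>
definition solves_on :: "('a::real_normed_vector \<Rightarrow> 'a) \<Rightarrow> (real \<Rightarrow> 'a) \<Rightarrow> real set \<Rightarrow> bool" where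
  "solves_on f x T \<longleftrightarrow> (\<forall>t\<in>T. (x has_vector_derivative f (x t)) (at t within T))"

text \<open>Lyapunov stability: solutions from nearby initial data exist for all forward time,
  and every (possibly only locally defined) forward solution stays close.\<close>
definition lyapunov_stable :: "('a::real_normed_vector \<Rightarrow> 'a) \<Rightarrow> 'a \<Rightarrow> bool" where
  "lyapunov_stable f x0 \<longleftrightarrow>
     (\<forall>e>0. \<exists>d>0. \<forall>y. norm (y - x0) < d \<longrightarrow>
        (\<exists>x. x 0 = y \<and> solves_on f x {0..}) \<and>
        (\<forall>x b. x 0 = y \<and> solves_on f x {0..<b} \<longrightarrow> (\<forall>t\<in>{0..<b}. norm (x t - x0) < e)))"

definition attractive :: "('a::real_normed_vector \<Rightarrow> 'a) \<Rightarrow> 'a \<Rightarrow> bool" where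
  "attractive f x0 \<longleftrightarrow>
     (\<exists>d>0. \<forall>x. solves_on f x {0..} \<and> norm (x 0 - x0) < d \<longrightarrow> (x \<longlongrightarrow> x0) at_top)"

definition locally_asymptotically_stable :: "('a::real_normed_vector \<Rightarrow> 'a) \<Rightarrow> 'a \<Rightarrow> bool" where
  "locally_asymptotically_stable f x0 \<longleftrightarrow> f x0 = 0 \<and> lyapunov_stable f x0 \<and> attractive f x0"

end

theory Submission
  imports Defs "HOL-Real_Asymp.Real_Asymp"
begin


lemma touch:
  fixes h :: "real \<Rightarrow> real"
  assumes der: "(h has_real_derivative D) (at t1 within {0..<b})" and "0 < t1" and "t1 < b"
    and neg: "\<forall>s\<in>{0..<t1}. h s < 0" and h1: "h t1 = 0"
  shows "D \<ge> 0"
proof (rule ccontr)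
  assume "\<not> D \<ge> 0"
  then have "D < 0" by simp
  from has_real_derivative_neg_dec_left[OF der this] obtain d where d: "d > 0"
    and dd: "\<forall>h'>0. t1 - h' \<in> {0..<b} \<longrightarrow> h' < d \<longrightarrow> h t1 < h (t1 - h')" by blast
  define hh where "hh = min (d/2) (t1/2)"
  have hh: "hh > 0" "hh < d" "hh \<le> t1/2" using d \<open>0 < t1\<close> by (auto simp: hh_def)
  have "t1 - hh \<in> {0..<b}" using hh \<open>t1 < b\<close> by auto
  with dd hh have "h t1 < h (t1 - hh)" by blast
  moreover have "h (t1 - hh) < 0" using neg hh by auto
  ultimately show False using h1 by simp
qed

lemma comp_deriv:
  fixes x :: "real \<Rightarrow> real^'n"
  assumes "(x has_vector_derivative v) F"
  shows "((\<lambda>t. x t $ i) has_real_derivative v $ i) F"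
  using bounded_linear.has_vector_derivative[OF bounded_linear_vec_nth assms]
  by (simp add: has_real_derivative_iff_has_vector_derivative)

lemma beta_deriv:
  fixes A c t :: real
  assumes "A > 0" "c > 0" "t \<ge> 0"
  shows "((\<lambda>t. A / sqrt (1 + c*A^2/2 * t)) has_real_derivative
          (-(c/4) * (A / sqrt (1 + c*A^2/2 * t))^3)) (at t)"
proof -
  have pos: "1 + c*A^2/2 * t > 0" using assms by (simp add: add_pos_nonneg)
  have s: "sqrt (1 + c*A^2/2 * t) > 0" using pos by simp
  define k where "k = c*A^2/2"
  define u where "u = 1 + k*t"
  have u: "u > 0" using pos by (simp add: u_def k_def)
  have d1: "((\<lambda>t. 1 + k*t) has_real_derivative k) (at t)"
    by (auto intro!: derivative_eq_intros)
  have d2: "((\<lambda>t. sqrt (1 + k*t)) has_real_derivative (inverse (sqrt u) / 2 * k)) (at t)"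
    using DERIV_chain2[where f=sqrt and g="\<lambda>t. 1 + k*t", OF _ d1] DERIV_real_sqrt[OF u] u_def by (metis times_divide_eq_left)
  have d3: "((\<lambda>t. A / sqrt (1 + k*t)) has_real_derivative
      ((0 * sqrt u - A * (inverse (sqrt u) / 2 * k)) / (sqrt u * sqrt u))) (at t)"
    using DERIV_divide[OF DERIV_const d2] u u_def by simp
  have su: "sqrt u > 0" using u by simp
  have eq: "(0 * sqrt u - A * (inverse (sqrt u) / 2 * k)) / (sqrt u * sqrt u) = -(c/4) * (A / sqrt u)^3"
    using su by (simp add: k_def field_simps power3_eq_cube power2_eq_square)
  show ?thesis using d3 unfolding eq by (simp add: k_def u_def)
qed


lemma nf_comp: "node_field a w \<epsilon> z $ i = a$i * (z$i)^3 * (1 - z$i) + \<epsilon> * (\<Sum>j\<in>UNIV. w$i$j * (z$j - z$i))"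
  by (simp add: node_field_def)

lemma barrier:
  fixes a :: "real^'n" and w :: "real^'n^'n" and H :: "real^'n \<Rightarrow> real^'n" and x :: "real \<Rightarrow> real^'n"
  assumes a: "\<forall>i. a$i \<le> -c" and c: "c > 0" and w: "\<forall>i j. w$i$j \<ge> 0" and eps: "\<epsilon> \<ge> 0"
    and H: "\<forall>z. (\<forall>i. \<bar>z$i\<bar> \<le> 1/2) \<longrightarrow> H z = node_field a w \<epsilon> z"
    and A: "0 < A" "A \<le> 1/2" and x0: "\<forall>i. \<bar>x 0 $ i\<bar> < A"
    and sol: "solves_on H x {0..<b}"
  shows "\<forall>t\<in>{0..<b}. \<forall>i. \<bar>x t $ i\<bar> < A / sqrt (1 + c*A^2/2 * t)"
proof (rule ccontr)
  define \<beta> where "\<beta> t = A / sqrt (1 + c*A^2/2 * t)" for t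
  assume "\<not> ?thesis"
  then obtain t0 i0 where t0: "t0 \<in> {0..<b}" "\<bar>x t0 $ i0\<bar> \<ge> \<beta> t0" by (auto simp: \<beta>_def not_less)
  define S where "S = {t\<in>{0..<b}. \<exists>i. \<bar>x t $ i\<bar> \<ge> \<beta> t}"
  have t0S: "t0 \<in> S" using t0 by (auto simp: S_def)
  define t1 where "t1 = Inf S"
  have bdd: "bdd_below S" by (rule bdd_belowI[of _ 0]) (simp add: S_def)
  have t1le: "t1 \<le> t0" using cInf_lower[OF t0S bdd] t1_def by simp
  have t1ge: "t1 \<ge> 0" unfolding t1_def
  proof (rule cInf_greatest)
    show "S \<noteq> {}" using t0S by blast
  next
    fix s assume "s \<in> S" then show "0 \<le> s" by (simp add: S_def)
  qed
  have t1b: "t1 < b" using t1le t0 by auto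
  have before: "\<forall>s\<in>{0..<t1}. \<forall>i. \<bar>x s $ i\<bar> < \<beta> s"
  proof (intro ballI allI)
    fix s i assume s: "s \<in> {0..<t1}"
    have "s \<notin> S" using cInf_lower[OF _ bdd, of s] s t1_def by force
    then show "\<bar>x s $ i\<bar> < \<beta> s" using s t1b by (auto simp: S_def not_le)
  qed
  have der: "\<And>t. t\<in>{0..<b} \<Longrightarrow> (x has_vector_derivative H (x t)) (at t within {0..<b})"
    using sol by (simp add: solves_on_def)
  have cont: "\<And>t. t\<in>{0..<b} \<Longrightarrow> continuous (at t within {0..<b}) x"
    by (rule has_vector_derivative_continuous[OF der])
  have bpos: "\<And>t. t \<ge> 0 \<Longrightarrow> \<beta> t > 0"
    using A c by (simp add: \<beta>_def add_pos_nonneg)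
  have ble: "\<And>t. t \<ge> 0 \<Longrightarrow> \<beta> t \<le> A"
  proof -
    fix t :: real assume "t \<ge> 0"
    then have "1 \<le> sqrt (1 + c*A^2/2 * t)" using c by simp
    then show "\<beta> t \<le> A" using A by (simp add: \<beta>_def divide_le_eq)
  qed
  have bder: "\<And>t. t \<ge> 0 \<Longrightarrow> (\<beta> has_real_derivative (-(c/4) * (\<beta> t)^3)) (at t)"
    unfolding \<beta>_def[abs_def] using beta_deriv A c by simp
  have bcont: "\<And>t. t \<ge> 0 \<Longrightarrow> isCont \<beta> t"
    by (rule DERIV_isCont[OF bder])
  have lim: "\<And>j t F. t \<in> {0..<b} \<Longrightarrow> F \<le> at t within {0..<b} \<Longrightarrow>
      ((\<lambda>s. \<bar>x s $ j\<bar> - \<beta> s) \<longlongrightarrow> \<bar>x t $ j\<bar> - \<beta> t) F"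
  proof -
    fix j t and F :: "real filter" assume t: "t \<in> {0..<b}" and F: "F \<le> at t within {0..<b}"
    have "(x \<longlongrightarrow> x t) (at t within {0..<b})" using cont[OF t] by (simp add: continuous_within)
    then have 1: "(x \<longlongrightarrow> x t) F" by (rule tendsto_mono[OF F])
    have "(\<beta> \<longlongrightarrow> \<beta> t) (at t)" using bcont t by (simp add: isCont_def)
    then have "(\<beta> \<longlongrightarrow> \<beta> t) (at t within {0..<b})" by (rule tendsto_within_subset) simp
    then have 2: "(\<beta> \<longlongrightarrow> \<beta> t) F" by (rule tendsto_mono[OF F])
    show "((\<lambda>s. \<bar>x s $ j\<bar> - \<beta> s) \<longlongrightarrow> \<bar>x t $ j\<bar> - \<beta> t) F"
      by (intro tendsto_intros 1 2)
  qed
  have t1S: "t1 \<in> S"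
  proof (rule ccontr)
    assume "t1 \<notin> S"
    then have lt: "\<forall>i. \<bar>x t1 $ i\<bar> - \<beta> t1 < 0" using t1ge t1b by (auto simp: S_def not_le)
    have "\<forall>\<^sub>F t in at t1 within {0..<b}. \<forall>i. \<bar>x t $ i\<bar> - \<beta> t < 0"
    proof (rule eventually_all_finite)
      fix i
      show "\<forall>\<^sub>F t in at t1 within {0..<b}. \<bar>x t $ i\<bar> - \<beta> t < 0"
        using order_tendstoD(2)[OF lim[of t1 "at t1 within {0..<b}" i] lt[rule_format, of i]] t1ge t1b
        by auto
    qed
    then obtain d where d: "d > 0" and dd: "\<And>t. t \<in> {0..<b} \<Longrightarrow> t \<noteq> t1 \<Longrightarrow> dist t t1 < d \<Longrightarrow>
        \<forall>i. \<bar>x t $ i\<bar> - \<beta> t < 0"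
      unfolding eventually_at by blast
    have "t1 + d \<le> Inf S"
    proof (rule cInf_greatest)
      show "S \<noteq> {}" using t0S by blast
    next
      fix s assume s: "s \<in> S"
      have "t1 \<le> s" using cInf_lower[OF s bdd] t1_def by simp
      moreover have "s \<noteq> t1" using s \<open>t1 \<notin> S\<close> by blast
      moreover have "\<not> (\<forall>i. \<bar>x s $ i\<bar> - \<beta> s < 0)" using s unfolding S_def by (auto simp: not_less)
      moreover have "s \<in> {0..<b}" using s by (simp add: S_def)
      ultimately have "\<not> dist s t1 < d" using dd[of s] by blast
      then show "t1 + d \<le> s" using \<open>t1 \<le> s\<close> by (simp add: dist_real_def)
    qed
    then show False using d t1_def by simp
  qed
  then obtain i where i: "\<bar>x t1 $ i\<bar> \<ge> \<beta> t1" by (auto simp: S_def)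
  have t1pos: "t1 > 0"
  proof (rule ccontr)
    assume "\<not> t1 > 0"
    then have "t1 = 0" using t1ge by simp
    then show False using i x0 \<beta>_def by (simp add: not_le[symmetric])
  qed
  have int: "at t1 within {0..<b} = at t1"
    by (rule at_within_interior) (use t1pos t1b in simp)
  have upper: "\<forall>j. \<bar>x t1 $ j\<bar> \<le> \<beta> t1"
  proof
    fix j
    have l: "((\<lambda>s. \<bar>x s $ j\<bar> - \<beta> s) \<longlongrightarrow> \<bar>x t1 $ j\<bar> - \<beta> t1) (at_left t1)"
    proof (rule lim)
      show "t1 \<in> {0..<b}" using t1ge t1b by simp
      show "at_left t1 \<le> at t1 within {0..<b}" unfolding int by (rule at_le) simp
    qed
    have "\<forall>\<^sub>F s in at_left t1. \<bar>x s $ j\<bar> - \<beta> s \<le> 0"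
      using eventually_at_left_real[OF t1pos]
    proof eventually_elim
      case (elim s)
      then have "s \<in> {0..<t1}" by simp
      then have "\<bar>x s $ j\<bar> < \<beta> s" using before by blast
      then show ?case by simp
    qed
    from tendsto_upperbound[OF l this] show "\<bar>x t1 $ j\<bar> \<le> \<beta> t1" by simp
  qed
  define B where "B = \<beta> t1"
  have B: "B > 0" "B \<le> 1/2" using bpos[OF t1ge] ble[OF t1ge] A by (auto simp: B_def)
  have eqi: "\<bar>x t1 $ i\<bar> = B" using i upper B_def by (simp add: order_antisym)
  have "\<forall>j. \<bar>x t1 $ j\<bar> \<le> 1/2"
  proof
    fix j show "\<bar>x t1 $ j\<bar> \<le> 1/2" using upper[rule_format, of j] B by (simp add: B_def)
  qed
  then have Hx: "H (x t1) = node_field a w \<epsilon> (x t1)"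
    using H by blast
  have dx: "((\<lambda>t. x t $ i) has_real_derivative (node_field a w \<epsilon> (x t1)) $ i) (at t1 within {0..<b})"
    using comp_deriv[OF der[of t1]] Hx t1ge t1b by simp
  have db: "(\<beta> has_real_derivative (-(c/4) * B^3)) (at t1 within {0..<b})"
    using bder[OF t1ge] B_def has_field_derivative_at_within by blast
  have aB: "a$i * B^3 * (1 - B) \<le> -(c/2) * B^3"
  proof -
    have p: "B^3 * (1 - B) \<ge> 0" using B by simp
    have "a$i * (B^3 * (1 - B)) \<le> -c * (B^3 * (1 - B))"
      using mult_right_mono[OF a[rule_format, of i] p] by simp
    moreover have "c * (B^3 / 2) \<le> c * (B^3 * (1 - B))"
      using B c by (intro mult_left_mono) (auto simp: field_simps)
    ultimately show ?thesis by (simp add: algebra_simps)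
  qed
  have aB2: "a$i * (-B)^3 * (1 + B) \<ge> c * B^3"
  proof -
    have p: "B^3 * (1 + B) \<ge> 0" using B by simp
    have "a$i * (B^3 * (1 + B)) \<le> -c * (B^3 * (1 + B))"
      using mult_right_mono[OF a[rule_format, of i] p] by simp
    moreover have "c * B^3 \<le> c * (B^3 * (1 + B))"
      using B c by (intro mult_left_mono) (auto simp: field_simps)
    ultimately show ?thesis by (simp add: algebra_simps power_minus_odd)
  qed
  show False
  proof (cases "x t1 $ i \<ge> 0")
    case True
    then have xi: "x t1 $ i = B" using eqi by simp
    have s: "(\<Sum>j\<in>UNIV. w$i$j * (x t1 $ j - x t1 $ i)) \<le> 0"
    proof (rule sum_nonpos)
      fix j
      have "x t1 $ j \<le> B" using upper B_def abs_le_D1 by blast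
      then show "w$i$j * (x t1 $ j - x t1 $ i) \<le> 0" using w xi by (simp add: mult_nonneg_nonpos)
    qed
    have F: "node_field a w \<epsilon> (x t1) $ i \<le> -(c/2) * B^3"
      using aB mult_nonneg_nonpos[OF eps s] xi by (simp add: nf_comp)
    have "0 \<le> node_field a w \<epsilon> (x t1) $ i - (-(c/4) * B^3)"
    proof (rule touch[of "\<lambda>t. x t $ i - \<beta> t" _ t1 b])
      show "((\<lambda>t. x t $ i - \<beta> t) has_real_derivative node_field a w \<epsilon> (x t1) $ i - - (c / 4) * B ^ 3)
          (at t1 within {0..<b})" by (rule DERIV_diff[OF dx db])
      show "\<forall>s\<in>{0..<t1}. x s $ i - \<beta> s < 0" using before by (force dest: abs_less_iff[THEN iffD1])
      show "x t1 $ i - \<beta> t1 = 0" using xi B_def by simp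
    qed (use t1pos t1b in auto)
    moreover have "c * B^3 > 0" using B c by simp
    ultimately show False using F by linarith
  next
    case False
    then have xi: "x t1 $ i = -B" using eqi by simp
    have s: "(\<Sum>j\<in>UNIV. w$i$j * (x t1 $ j - x t1 $ i)) \<ge> 0"
    proof (rule sum_nonneg)
      fix j
      have "x t1 $ j \<ge> -B" using upper B_def by (metis abs_le_D2 minus_le_iff)
      then show "w$i$j * (x t1 $ j - x t1 $ i) \<ge> 0" using w xi by simp
    qed
    have F: "node_field a w \<epsilon> (x t1) $ i \<ge> c * B^3"
      using aB2 mult_nonneg_nonneg[OF eps s] xi by (simp add: nf_comp)
    have "0 \<le> - node_field a w \<epsilon> (x t1) $ i - (-(c/4) * B^3)"
    proof (rule touch[of "\<lambda>t. - x t $ i - \<beta> t" _ t1 b])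
      show "((\<lambda>t. - x t $ i - \<beta> t) has_real_derivative - node_field a w \<epsilon> (x t1) $ i - - (c / 4) * B ^ 3)
          (at t1 within {0..<b})" by (rule DERIV_diff[OF DERIV_minus[OF dx] db])
      show "\<forall>s\<in>{0..<t1}. - x s $ i - \<beta> s < 0" using before by (force dest: abs_less_iff[THEN iffD1])
      show "- x t1 $ i - \<beta> t1 = 0" using xi B_def by simp
    qed (use t1pos t1b in auto)
    moreover have "c * B^3 > 0" using B c by simp
    ultimately show False using F by linarith
  qed
qed



lemma int_pow:
  fixes t :: real
  assumes "t \<ge> 0"
  shows "((\<lambda>s. s^n) has_integral t^(Suc n)/(Suc n)) {0..t}"
proof -
  have "((\<lambda>s. s^n) has_integral (\<lambda>s. s^(Suc n)/(Suc n)) t - (\<lambda>s. s^(Suc n)/(Suc n)) 0) {0..t}"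
  proof (rule fundamental_theorem_of_calculus)
    fix x :: real assume "x \<in> {0..t}"
    have "((\<lambda>s. s^(Suc n)) has_real_derivative real (Suc n) * x^(Suc n - Suc 0)) (at x within {0..t})"
      by (rule DERIV_pow)
    then have "((\<lambda>s. s^(Suc n)/(Suc n)) has_real_derivative real (Suc n) * x^(Suc n - Suc 0) / (Suc n)) (at x within {0..t})"
      by (rule DERIV_cdivide)
    then have "((\<lambda>s. s^(Suc n)/(Suc n)) has_real_derivative x^n) (at x within {0..t})"
      by (simp del: of_nat_Suc)
    then show "((\<lambda>s. s^(Suc n)/(Suc n)) has_vector_derivative x^n) (at x within {0..t})"
      by (simp add: has_real_derivative_iff_has_vector_derivative)
  qed (use assms in auto)
  then show ?thesis by simp
qed

primrec picard :: "('a::euclidean_space \<Rightarrow> 'a) \<Rightarrow> 'a \<Rightarrow> nat \<Rightarrow> real \<Rightarrow> 'a" where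
  "picard G y 0 = (\<lambda>t. y)"
| "picard G y (Suc k) = (\<lambda>t. y + integral {0..t} (\<lambda>s. G (picard G y k s)))"

lemma picard_exists:
  fixes G :: "'a::euclidean_space \<Rightarrow> 'a"
  assumes M: "\<And>z. norm (G z) \<le> M" and L: "\<And>u v. norm (G u - G v) \<le> L * norm (u - v)" and L0: "L \<ge> 0"
  shows "\<exists>x. x 0 = y \<and> solves_on G x {0..}"
proof -
  define X where "X = picard G y"
  have M0: "M \<ge> 0" using M[of 0] norm_ge_zero order_trans by blast
  have Gc: "continuous_on UNIV G"
    by (rule lipschitz_on_continuous_on[of L], rule lipschitz_onI) (use L L0 in \<open>auto simp: dist_norm\<close>)
  have contX: "continuous_on {0..T} (X k)" for k T
  proof (induction k arbitrary: T)
    case 0 then show ?case by (simp add: X_def)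
  next
    case (Suc k)
    have "continuous_on {0..T} (\<lambda>s. G (X k s))"
      using continuous_on_compose2[OF Gc Suc.IH] by simp
    then have i: "(\<lambda>s. G (X k s)) integrable_on {0..T}" by (rule integrable_continuous_interval)
    have e: "X (Suc k) = (\<lambda>t. y + integral {0..t} (\<lambda>s. G (X k s)))" by (simp add: X_def)
    show ?case unfolding e
      by (intro continuous_on_add continuous_on_const indefinite_integral_continuous_1 i)
  qed
  have intX: "(\<lambda>s. G (X k s)) integrable_on {0..T}" for k T
    using continuous_on_compose2[OF Gc contX] integrable_continuous_interval by blast
  have XS: "X (Suc k) t = y + integral {0..t} (\<lambda>s. G (X k s))" for k t
    by (simp add: X_def)
  have step: "norm (X (Suc k) t - X k t) \<le> M * L^k * t^(Suc k) / fact (Suc k)" if "t \<ge> 0" for k t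
    using that
  proof (induction k arbitrary: t)
    case 0
    have "norm (integral {0..t} (\<lambda>s. G y)) \<le> integral {0..t} (\<lambda>s. M)"
      by (rule Henstock_Kurzweil_Integration.integral_norm_bound_integral) (use M in auto)
    then show ?case using 0 by (simp add: X_def mult.commute)
  next
    case (Suc k)
    have "X (Suc (Suc k)) t - X (Suc k) t = integral {0..t} (\<lambda>s. G (X (Suc k) s) - G (X k s))"
      unfolding XS[of "Suc k" t] XS[of k t] integral_diff[OF intX intX] by simp
    also have "norm \<dots> \<le> integral {0..t} (\<lambda>s. L * (M * L^k * s^(Suc k) / fact (Suc k)))"
    proof (rule Henstock_Kurzweil_Integration.integral_norm_bound_integral)
      show "(\<lambda>s. G (X (Suc k) s) - G (X k s)) integrable_on {0..t}"
        by (intro integrable_diff intX)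
      show "(\<lambda>s. L * (M * L ^ k * s ^ Suc k / fact (Suc k))) integrable_on {0..t}"
        by (intro integrable_continuous_interval continuous_intros) (simp del: fact_Suc)
      fix s assume s: "s \<in> {0..t}"
      have "norm (G (X (Suc k) s) - G (X k s)) \<le> L * norm (X (Suc k) s - X k s)" by (rule L)
      also have "\<dots> \<le> L * (M * L^k * s^(Suc k) / fact (Suc k))"
        using Suc.IH[of s] s L0 by (intro mult_left_mono) auto
      finally show "norm (G (X (Suc k) s) - G (X k s)) \<le> L * (M * L^k * s^(Suc k) / fact (Suc k))" .
    qed
    also have "\<dots> = L * (M * L^k / fact (Suc k)) * (t^(Suc (Suc k)) / (Suc (Suc k)))"
    proof -
      define C where "C = L * (M * L^k / fact (Suc k))"
      have "((\<lambda>s. C * s^(Suc k)) has_integral C * (t^(Suc (Suc k)) / (Suc (Suc k)))) {0..t}"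
        by (rule has_integral_mult_right[OF int_pow[OF Suc.prems]])
      moreover have "(\<lambda>s. L * (M * L^k * s^(Suc k) / fact (Suc k))) = (\<lambda>s. C * s^(Suc k))"
        by (simp add: C_def fun_eq_iff)
      ultimately have "integral {0..t} (\<lambda>s. L * (M * L^k * s^(Suc k) / fact (Suc k))) = C * (t^(Suc (Suc k)) / (Suc (Suc k)))"
        by (metis integral_unique)
      then show ?thesis by (simp only: C_def)
    qed
    also have "\<dots> = M * L^(Suc k) * t^(Suc (Suc k)) / fact (Suc (Suc k))"
      by (simp add: field_simps del: of_nat_Suc fact_Suc) (simp add: fact_Suc algebra_simps)
    finally show ?case .
  qed
  have conv: "convergent (\<lambda>k. X k t)" if t: "t \<ge> 0" for t
  proof -
    have "summable (\<lambda>k. (M*t) * (inverse (fact k) * (L*t)^k))"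
      by (intro summable_mult summable_exp)
    then have "summable (\<lambda>k. norm (X (Suc k) t - X k t))"
    proof (rule summable_comparison_test[rotated], intro exI allI impI)
      fix k :: nat
      have "fact k \<le> (fact (Suc k) :: real)" by (rule fact_mono) simp
      then have "M * L^k * t^(Suc k) / fact (Suc k) \<le> M * L^k * t^(Suc k) / fact k"
        using M0 L0 t by (intro divide_left_mono) auto
      also have "\<dots> = (M*t) * (inverse (fact k) * (L*t)^k)"
        by (simp add: field_simps power_mult_distrib)
      finally show "norm (norm (X (Suc k) t - X k t)) \<le> (M*t) * (inverse (fact k) * (L*t)^k)"
        using step[OF t, of k] by simp
    qed
    then have "summable (\<lambda>k. X (Suc k) t - X k t)" by (rule summable_norm_cancel)
    then have "(\<lambda>n. \<Sum>k<n. X (Suc k) t - X k t) \<longlonglongrightarrow> (\<Sum>k. X (Suc k) t - X k t)"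
      by (rule summable_LIMSEQ)
    then have "(\<lambda>n. X n t - X 0 t) \<longlonglongrightarrow> (\<Sum>k. X (Suc k) t - X k t)"
      by (simp only: sum_lessThan_telescope[of "\<lambda>k. X k t"])
    then have "(\<lambda>n. (X n t - X 0 t) + X 0 t) \<longlonglongrightarrow> (\<Sum>k. X (Suc k) t - X k t) + X 0 t"
      by (intro tendsto_add tendsto_const)
    then show ?thesis unfolding convergent_def by auto
  qed
  define Z where "Z t = lim (\<lambda>k. X k t)" for t
  have XZ: "(\<lambda>k. X k t) \<longlonglongrightarrow> Z t" if "t \<ge> 0" for t
    using conv[OF that] by (simp add: Z_def convergent_LIMSEQ_iff)
  have lipX: "norm (X k t - X k s) \<le> M * (t - s)" if "0 \<le> s" "s \<le> t" for k s t
  proof (cases k)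
    case 0 then show ?thesis using M0 that by (simp add: X_def)
  next
    case (Suc j)
    have "integral {0..t} (\<lambda>u. G (X j u)) = integral {0..s} (\<lambda>u. G (X j u)) + integral {s..t} (\<lambda>u. G (X j u))"
      using Henstock_Kurzweil_Integration.integral_combine[OF that intX] by simp
    then have "X k t - X k s = integral {s..t} (\<lambda>u. G (X j u))" using Suc XS by simp
    also have "norm \<dots> \<le> integral {s..t} (\<lambda>u. M)"
      by (rule Henstock_Kurzweil_Integration.integral_norm_bound_integral)
         (use M integrable_on_subinterval[OF intX[of j t]] that in auto)
    finally show ?thesis using that by (simp add: mult.commute)
  qed
  have lipZ: "norm (Z t - Z s) \<le> M * (t - s)" if "0 \<le> s" "s \<le> t" for s t
  proof -
    have "(\<lambda>k. norm (X k t - X k s)) \<longlonglongrightarrow> norm (Z t - Z s)"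
      using that by (intro tendsto_intros XZ) auto
    then show ?thesis
      by (rule tendsto_upperbound) (use lipX[OF that] in auto)
  qed
  have contZ: "continuous_on {0..} Z"
  proof (rule lipschitz_on_continuous_on[of M], rule lipschitz_onI)
    fix s t :: real assume st: "s \<in> {0..}" "t \<in> {0..}"
    show "dist (Z s) (Z t) \<le> M * dist s t"
    proof (cases "s \<le> t")
      case True then show ?thesis using lipZ[of s t] st by (simp add: dist_norm norm_minus_commute dist_real_def)
    next
      case False then show ?thesis using lipZ[of t s] st by (simp add: dist_norm dist_real_def)
    qed
  qed (rule M0)
  have GZc: "continuous_on {0..} (\<lambda>s. G (Z s))"
    using continuous_on_compose2[OF Gc contZ] by simp
  have inteq: "Z t = y + integral {0..t} (\<lambda>s. G (Z s))" if t: "t \<ge> 0" for t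
  proof -
    have "(\<lambda>k. integral {0..t} (\<lambda>s. G (X k s))) \<longlonglongrightarrow> integral {0..t} (\<lambda>s. G (Z s))"
    proof (rule dominated_convergence(2))
      show "(\<lambda>s. G (X k s)) integrable_on {0..t}" for k by (rule intX)
      show "(\<lambda>s. M) integrable_on {0..t}" by (rule integrable_const_ivl)
      show "norm (G (X k s)) \<le> M" if "s \<in> {0..t}" for k s by (rule M)
      show "(\<lambda>k. G (X k s)) \<longlonglongrightarrow> G (Z s)" if "s \<in> {0..t}" for s
        using that by (intro isCont_tendsto_compose[OF _ XZ]) (use Gc continuous_on_eq_continuous_at in auto)
    qed
    then have "(\<lambda>k. X (Suc k) t) \<longlonglongrightarrow> y + integral {0..t} (\<lambda>s. G (Z s))"
      unfolding XS by (intro tendsto_intros)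
    moreover have "(\<lambda>k. X (Suc k) t) \<longlonglongrightarrow> Z t" using LIMSEQ_Suc[OF XZ[OF t]] .
    ultimately show ?thesis using LIMSEQ_unique by blast
  qed
  have "solves_on G Z {0..}"
    unfolding solves_on_def
  proof
    fix t :: real assume t: "t \<in> {0..}"
    have "((\<lambda>u. integral {0..u} (\<lambda>s. G (Z s))) has_vector_derivative G (Z t)) (at t within {0..t+1})"
      using t by (intro integral_has_vector_derivative continuous_on_subset[OF GZc]) auto
    moreover have "at t within {0..t+1} = at t within {0..}"
      by (rule at_within_nhd[where S="{t - 1 <..< t + 1}"]) auto
    ultimately have "((\<lambda>u. integral {0..u} (\<lambda>s. G (Z s))) has_vector_derivative G (Z t)) (at t within {0..})"
      by simp
    then have "((\<lambda>u. y + integral {0..u} (\<lambda>s. G (Z s))) has_vector_derivative G (Z t)) (at t within {0..})"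
      by (intro derivative_eq_intros) auto
    then show "(Z has_vector_derivative G (Z t)) (at t within {0..})"
      by (rule has_vector_derivative_transform[OF t, rotated]) (use inteq in auto)
  qed
  moreover have "Z 0 = y" using inteq[of 0] by simp
  ultimately show ?thesis by blast
qed



lemma p_bound:
  fixes u :: real assumes "\<bar>u\<bar> \<le> 1/2"
  shows "\<bar>u^3 * (1 - u)\<bar> \<le> 1"
proof -
  have "\<bar>u\<bar>^3 \<le> (1/2)^3" using assms by (intro power_mono) auto
  moreover have "\<bar>1 - u\<bar> \<le> 3/2" using assms by auto
  ultimately have "\<bar>u\<bar>^3 * \<bar>1 - u\<bar> \<le> (1/2)^3 * (3/2)"
    by (intro mult_mono) auto
  also have "(1/2::real)^3 * (3/2) \<le> 1" by (simp add: power3_eq_cube)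
  finally show ?thesis by (simp add: abs_mult power_abs)
qed

lemma p_lip:
  fixes u v :: real assumes u: "\<bar>u\<bar> \<le> 1/2" and v: "\<bar>v\<bar> \<le> 1/2"
  shows "\<bar>u^3 * (1 - u) - v^3 * (1 - v)\<bar> \<le> 2 * \<bar>u - v\<bar>"
proof -
  have e: "u^3 * (1 - u) - v^3 * (1 - v) = (u - v) * ((u^2 + u * v + v^2) - (u + v) * (u^2 + v^2))"
    by (simp add: algebra_simps power2_eq_square power3_eq_cube)
  have u2: "u^2 \<le> 1/4"
  proof -
    have "\<bar>u\<bar>^2 \<le> (1/2)^2" using u by (intro power_mono) auto
    then show ?thesis by (simp add: power2_abs power2_eq_square)
  qed
  have v2: "v^2 \<le> 1/4"
  proof -
    have "\<bar>v\<bar>^2 \<le> (1/2)^2" using v by (intro power_mono) auto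
    then show ?thesis by (simp add: power2_abs power2_eq_square)
  qed
  have uv: "\<bar>u * v\<bar> \<le> 1/4"
  proof -
    have "\<bar>u\<bar> * \<bar>v\<bar> \<le> (1/2) * (1/2)" using u v by (intro mult_mono) auto
    then show ?thesis by (simp add: abs_mult)
  qed
  have s1: "\<bar>u + v\<bar> \<le> 1" using u v by auto
  have s2: "\<bar>(u + v) * (u^2 + v^2)\<bar> \<le> 1/2"
  proof -
    have "\<bar>u + v\<bar> * (u^2 + v^2) \<le> 1 * (1/2)" using s1 u2 v2 by (intro mult_mono) auto
    then show ?thesis by (simp add: abs_mult)
  qed
  have q: "\<bar>(u^2 + u * v + v^2) - (u + v) * (u^2 + v^2)\<bar> \<le> 2"
    using s2 uv u2 v2 zero_le_power2[of u] zero_le_power2[of v] unfolding abs_le_iff by linarith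
  have "\<bar>u^3 * (1 - u) - v^3 * (1 - v)\<bar> = \<bar>u - v\<bar> * \<bar>(u^2 + u * v + v^2) - (u + v) * (u^2 + v^2)\<bar>"
    unfolding e by (simp add: abs_mult)
  also have "\<dots> \<le> \<bar>u - v\<bar> * 2" using q by (intro mult_left_mono) auto
  finally show ?thesis by simp
qed


lemma F_bound:
  fixes a :: "real^'n" and w :: "real^'n^'n"
  assumes eps: "\<epsilon> \<ge> 0" and w: "\<forall>i j. w$i$j \<ge> 0" and u: "\<forall>i. \<bar>u$i\<bar> \<le> 1/2"
  shows "norm (node_field a w \<epsilon> u) \<le> (\<Sum>i\<in>UNIV. \<bar>a$i\<bar> + \<epsilon> * (\<Sum>j\<in>UNIV. w$i$j))"
proof -
  have comp: "\<bar>node_field a w \<epsilon> u $ i\<bar> \<le> \<bar>a$i\<bar> + \<epsilon> * (\<Sum>j\<in>UNIV. w$i$j)" for i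
  proof -
    have 1: "\<bar>a$i * (u$i)^3 * (1 - u$i)\<bar> \<le> \<bar>a$i\<bar>"
    proof -
      have "\<bar>a$i\<bar> * \<bar>(u$i)^3 * (1 - u$i)\<bar> \<le> \<bar>a$i\<bar> * 1"
        using p_bound u by (intro mult_left_mono) auto
      then show ?thesis by (simp add: abs_mult mult.assoc)
    qed
    have 2: "\<bar>\<Sum>j\<in>UNIV. w$i$j * (u$j - u$i)\<bar> \<le> (\<Sum>j\<in>UNIV. w$i$j)"
    proof -
      have "\<bar>\<Sum>j\<in>UNIV. w$i$j * (u$j - u$i)\<bar> \<le> (\<Sum>j\<in>UNIV. \<bar>w$i$j * (u$j - u$i)\<bar>)"
        by (rule sum_abs)
      also have "\<dots> \<le> (\<Sum>j\<in>UNIV. w$i$j)"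
      proof (rule sum_mono)
        fix j
        have "\<bar>u$j - u$i\<bar> \<le> 1" using u[rule_format, of i] u[rule_format, of j] by auto
        then have "w$i$j * \<bar>u$j - u$i\<bar> \<le> w$i$j * 1" using w by (intro mult_left_mono) auto
        then show "\<bar>w$i$j * (u$j - u$i)\<bar> \<le> w$i$j" using w by (simp add: abs_mult)
      qed
      finally show ?thesis .
    qed
    have 3: "\<bar>\<epsilon> * (\<Sum>j\<in>UNIV. w$i$j * (u$j - u$i))\<bar> \<le> \<epsilon> * (\<Sum>j\<in>UNIV. w$i$j)"
      using 2 eps by (simp add: abs_mult mult_left_mono)
    show ?thesis unfolding nf_comp using 1 3 by (smt (verit) abs_triangle_ineq)
  qed
  have "norm (node_field a w \<epsilon> u) \<le> (\<Sum>i\<in>UNIV. \<bar>node_field a w \<epsilon> u $ i\<bar>)" by (rule norm_le_l1_cart)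
  also have "\<dots> \<le> (\<Sum>i\<in>UNIV. \<bar>a$i\<bar> + \<epsilon> * (\<Sum>j\<in>UNIV. w$i$j))" by (intro sum_mono comp)
  finally show ?thesis .
qed

lemma F_lip:
  fixes a :: "real^'n" and w :: "real^'n^'n"
  assumes eps: "\<epsilon> \<ge> 0" and w: "\<forall>i j. w$i$j \<ge> 0" and u: "\<forall>i. \<bar>u$i\<bar> \<le> 1/2" and v: "\<forall>i. \<bar>v$i\<bar> \<le> 1/2"
  shows "norm (node_field a w \<epsilon> u - node_field a w \<epsilon> v)
     \<le> (\<Sum>i\<in>UNIV. 2 * \<bar>a$i\<bar> + 2 * \<epsilon> * (\<Sum>j\<in>UNIV. w$i$j)) * norm (u - v)"
proof -
  let ?n = "norm (u - v)"
  have comp: "\<bar>node_field a w \<epsilon> u $ i - node_field a w \<epsilon> v $ i\<bar>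
      \<le> (2 * \<bar>a$i\<bar> + 2 * \<epsilon> * (\<Sum>j\<in>UNIV. w$i$j)) * ?n" for i
  proof -
    have e: "node_field a w \<epsilon> u $ i - node_field a w \<epsilon> v $ i =
      a$i * ((u$i)^3 * (1 - u$i) - (v$i)^3 * (1 - v$i)) + \<epsilon> * (\<Sum>j\<in>UNIV. w$i$j * ((u$j - v$j) - (u$i - v$i)))"
    proof -
      have s: "(\<Sum>j\<in>UNIV. w$i$j * (u$j - u$i)) - (\<Sum>j\<in>UNIV. w$i$j * (v$j - v$i))
          = (\<Sum>j\<in>UNIV. w$i$j * ((u$j - v$j) - (u$i - v$i)))"
        by (simp only: sum_subtractf[symmetric]) (rule sum.cong, simp, simp add: algebra_simps)
      have "node_field a w \<epsilon> u $ i - node_field a w \<epsilon> v $ i =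
        a$i * ((u$i)^3 * (1 - u$i) - (v$i)^3 * (1 - v$i)) + \<epsilon> * ((\<Sum>j\<in>UNIV. w$i$j * (u$j - u$i)) - (\<Sum>j\<in>UNIV. w$i$j * (v$j - v$i)))"
        unfolding nf_comp by (simp add: algebra_simps)
      then show ?thesis unfolding s .
    qed
    have ci: "\<bar>u$k - v$k\<bar> \<le> ?n" for k using component_le_norm_cart[of "u - v" k] by simp
    have 1: "\<bar>a$i * ((u$i)^3 * (1 - u$i) - (v$i)^3 * (1 - v$i))\<bar> \<le> 2 * \<bar>a$i\<bar> * ?n"
    proof -
      have "\<bar>(u$i)^3 * (1 - u$i) - (v$i)^3 * (1 - v$i)\<bar> \<le> 2 * ?n"
        using p_lip[of "u$i" "v$i"] u v ci[of i] by force
      then have "\<bar>a$i\<bar> * \<bar>(u$i)^3 * (1 - u$i) - (v$i)^3 * (1 - v$i)\<bar> \<le> \<bar>a$i\<bar> * (2 * ?n)"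
        by (intro mult_left_mono) auto
      then show ?thesis by (simp add: abs_mult)
    qed
    have 2: "\<bar>\<Sum>j\<in>UNIV. w$i$j * ((u$j - v$j) - (u$i - v$i))\<bar> \<le> (\<Sum>j\<in>UNIV. w$i$j) * (2 * ?n)"
    proof -
      have "\<bar>\<Sum>j\<in>UNIV. w$i$j * ((u$j - v$j) - (u$i - v$i))\<bar> \<le> (\<Sum>j\<in>UNIV. \<bar>w$i$j * ((u$j - v$j) - (u$i - v$i))\<bar>)"
        by (rule sum_abs)
      also have "\<dots> \<le> (\<Sum>j\<in>UNIV. w$i$j * (2 * ?n))"
      proof (rule sum_mono)
        fix j
        have "\<bar>(u$j - v$j) - (u$i - v$i)\<bar> \<le> 2 * ?n" using ci[of i] ci[of j] by auto
        then have "w$i$j * \<bar>(u$j - v$j) - (u$i - v$i)\<bar> \<le> w$i$j * (2 * ?n)" using w by (intro mult_left_mono) auto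
        then show "\<bar>w$i$j * ((u$j - v$j) - (u$i - v$i))\<bar> \<le> w$i$j * (2 * ?n)" using w by (simp add: abs_mult)
      qed
      finally show ?thesis by (simp add: sum_distrib_right)
    qed
    have 3: "\<bar>\<epsilon> * (\<Sum>j\<in>UNIV. w$i$j * ((u$j - v$j) - (u$i - v$i)))\<bar> \<le> \<epsilon> * ((\<Sum>j\<in>UNIV. w$i$j) * (2 * ?n))"
      using 2 eps by (simp add: abs_mult mult_left_mono)
    have "\<bar>node_field a w \<epsilon> u $ i - node_field a w \<epsilon> v $ i\<bar> \<le> 2 * \<bar>a$i\<bar> * ?n + \<epsilon> * ((\<Sum>j\<in>UNIV. w$i$j) * (2 * ?n))"
      unfolding e using 1 3 by (smt (verit) abs_triangle_ineq)
    then show ?thesis by (simp add: algebra_simps)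
  qed
  have "norm (node_field a w \<epsilon> u - node_field a w \<epsilon> v) \<le> (\<Sum>i\<in>UNIV. \<bar>(node_field a w \<epsilon> u - node_field a w \<epsilon> v) $ i\<bar>)"
    by (rule norm_le_l1_cart)
  also have "\<dots> \<le> (\<Sum>i\<in>UNIV. (2 * \<bar>a$i\<bar> + 2 * \<epsilon> * (\<Sum>j\<in>UNIV. w$i$j)) * ?n)"
    by (intro sum_mono) (simp add: comp)
  finally show ?thesis by (simp add: sum_distrib_right)
qed


lemma clamp_id: "\<bar>x\<bar> \<le> 1/2 \<Longrightarrow> max (-1/2) (min (1/2) x) = (x::real)"
proof -
  assume h: "\<bar>x\<bar> \<le> 1/2"
  then have "-1/2 \<le> x" "x \<le> 1/2" by auto
  then show ?thesis by (simp add: min_absorb2 max_absorb2)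
qed

lemma solves_on_subset: "solves_on f x T \<Longrightarrow> S \<subseteq> T \<Longrightarrow> solves_on f x S"
  unfolding solves_on_def by (meson has_vector_derivative_within_subset subsetD)

lemma beta_le:
  fixes A c t :: real
  assumes "0 < A" "0 < c" "0 \<le> t"
  shows "A / sqrt (1 + c*A^2/2 * t) \<le> A"
proof -
  have "1 \<le> sqrt (1 + c*A^2/2 * t)" using assms by simp
  then show ?thesis using assms by (simp add: divide_le_eq)
qed

theorem proposition3:
  fixes a :: "real^'n" and w :: "real^'n^'n"
  assumes "\<forall>i. a$i \<noteq> 0"
    and "\<forall>i. w$i$i = 0"
    and "\<forall>i. a$i < 0"
    and "\<forall>i j. w$i$j \<ge> 0"
    and "strongly_connected w"
  shows "\<exists>\<epsilon>0>0. \<forall>\<epsilon>. 0 < \<epsilon> \<and> \<epsilon> < \<epsilon>0 \<longrightarrow>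
           locally_asymptotically_stable (node_field a w \<epsilon>) 0"
proof -
  have w: "\<forall>i j. w$i$j \<ge> 0" by fact
  define c where "c = Min (range (\<lambda>i. - a$i))"
  have cpos: "c > 0" unfolding c_def using assms(3) by (subst Min_gr_iff) auto
  have ac: "\<forall>i. a$i \<le> -c"
  proof
    fix i
    have "c \<le> - a$i" unfolding c_def by (rule Min_le) auto
    then show "a$i \<le> -c" by simp
  qed
  show ?thesis
  proof (intro exI[of _ 1] conjI allI impI)
    show "(0::real) < 1" by simp
    fix \<epsilon> :: real assume "0 < \<epsilon> \<and> \<epsilon> < 1"
    then have eps: "\<epsilon> \<ge> 0" by simp
    define F where "F = node_field a w \<epsilon>"
    define cl where "cl z = (\<chi> i. max (-1/2) (min (1/2) (z$i)))" for z :: "real^'n"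
    define G where "G z = F (cl z)" for z
    have clb: "\<forall>i. \<bar>cl z $ i\<bar> \<le> 1/2" for z by (auto simp: cl_def max_def min_def)
    have clid: "cl z = z" if "\<forall>i. \<bar>z$i\<bar> \<le> 1/2" for z
    proof -
      have "\<forall>i. max (-1/2) (min (1/2) (z$i)) = z$i" using that clamp_id by blast
      then show ?thesis by (simp add: cl_def vec_eq_iff)
    qed
    have clnorm: "norm (cl u - cl v) \<le> norm (u - v)" for u v
      by (rule norm_le_componentwise_cart) (auto simp: cl_def max_def min_def abs_if)
    have HG: "\<forall>z. (\<forall>i. \<bar>z$i\<bar> \<le> 1/2) \<longrightarrow> G z = node_field a w \<epsilon> z"
      using clid by (simp add: G_def F_def)
    have HF: "\<forall>z. (\<forall>i. \<bar>z$i\<bar> \<le> 1/2) \<longrightarrow> F z = node_field a w \<epsilon> z"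
      by (simp add: F_def)
    define M where "M = (\<Sum>i\<in>UNIV. \<bar>a$i\<bar> + \<epsilon> * (\<Sum>j\<in>UNIV. w$i$j))"
    define L where "L = (\<Sum>i\<in>UNIV. 2 * \<bar>a$i\<bar> + 2 * \<epsilon> * (\<Sum>j\<in>UNIV. w$i$j))"
    have GM: "norm (G z) \<le> M" for z
      unfolding G_def F_def M_def by (rule F_bound[OF eps w clb])
    have L0: "L \<ge> 0" unfolding L_def using w eps
      by (intro sum_nonneg add_nonneg_nonneg mult_nonneg_nonneg) auto
    have GL: "norm (G u - G v) \<le> L * norm (u - v)" for u v
    proof -
      have "norm (G u - G v) \<le> L * norm (cl u - cl v)"
        unfolding G_def F_def L_def by (rule F_lip[OF eps w clb clb])
      also have "\<dots> \<le> L * norm (u - v)" using clnorm L0 by (intro mult_left_mono) auto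
      finally show ?thesis .
    qed
    have F0: "F 0 = 0" by (simp add: F_def node_field_def vec_eq_iff)
    have bound: "\<forall>t\<in>{0..<b}. \<forall>i. \<bar>x t $ i\<bar> < A"
      if "0 < A" "A \<le> 1/2" "\<forall>i. \<bar>x 0 $ i\<bar> < A" "solves_on F x {0..<b}" for x b A
    proof (intro ballI allI)
      fix t i assume t: "t \<in> {0..<b}"
      have "\<bar>x t $ i\<bar> < A / sqrt (1 + c*A^2/2 * t)"
        using barrier[OF ac cpos w eps HF that] t by blast
      also have "\<dots> \<le> A" using beta_le[of A c t] that cpos t by simp
      finally show "\<bar>x t $ i\<bar> < A" .
    qed
    have exist: "\<exists>x. x 0 = y \<and> solves_on F x {0..}" if y: "\<forall>i. \<bar>y$i\<bar> < 1/2" for y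
    proof -
      obtain x where x0: "x 0 = y" and xs: "solves_on G x {0..}"
        using picard_exists[OF GM GL L0] by blast
      have small: "\<forall>i. \<bar>x t $ i\<bar> \<le> 1/2" if t: "t \<ge> 0" for t
      proof
        fix i
        have s: "solves_on G x {0..<t+1}" by (rule solves_on_subset[OF xs]) auto
        have "\<bar>x t $ i\<bar> < 1/2 / sqrt (1 + c*(1/2)^2/2 * t)"
          using barrier[OF ac cpos w eps HG _ _ _ s, of "1/2"] y x0 t by simp
        also have "\<dots> \<le> 1/2" using beta_le[of "1/2" c t] cpos t by simp
        finally show "\<bar>x t $ i\<bar> \<le> 1/2" by simp
      qed
      have "solves_on F x {0..}"
        unfolding solves_on_def
      proof
        fix t :: real assume t: "t \<in> {0..}"
        have "(x has_vector_derivative G (x t)) (at t within {0..})"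
          using xs t by (simp add: solves_on_def)
        moreover have "G (x t) = F (x t)" using clid small t by (simp add: G_def)
        ultimately show "(x has_vector_derivative F (x t)) (at t within {0..})" by simp
      qed
      with x0 show ?thesis by blast
    qed
    have yi: "\<forall>i. \<bar>y$i\<bar> < d" if "norm (y - 0) < d" for y :: "real^'n" and d
      using that component_le_norm_cart[of y] by (metis diff_zero le_less_trans)
    have normb: "norm (x t) \<le> real CARD('n) * A" if "\<forall>i. \<bar>x t $ i\<bar> < A" for x :: "real \<Rightarrow> real^'n" and t A
    proof -
      have "norm (x t) \<le> (\<Sum>i\<in>UNIV. \<bar>x t $ i\<bar>)" by (rule norm_le_l1_cart)
      also have "\<dots> \<le> (\<Sum>i\<in>(UNIV::'n set). A)" by (rule sum_mono) (use that in \<open>simp add: less_imp_le\<close>)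
      finally show ?thesis by simp
    qed
    have stab: "lyapunov_stable F 0"
      unfolding lyapunov_stable_def
    proof (intro allI impI)
      fix e :: real assume e: "e > 0"
      define d where "d = min (1/2) (e / (real CARD('n) + 1))"
      have d: "d > 0" "d \<le> 1/2" using e unfolding d_def by (simp add: add_pos_nonneg, linarith)
      have "real CARD('n) * d \<le> real CARD('n) * (e / (real CARD('n) + 1))"
        by (intro mult_left_mono) (auto simp: d_def)
      also have "\<dots> < e" using e by (simp add: field_simps)
      finally have de: "real CARD('n) * d < e" .
      show "\<exists>d>0. \<forall>y. norm (y - 0) < d \<longrightarrow> (\<exists>x. x 0 = y \<and> solves_on F x {0..}) \<and>
          (\<forall>x b. x 0 = y \<and> solves_on F x {0..<b} \<longrightarrow> (\<forall>t\<in>{0..<b}. norm (x t - 0) < e))"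
      proof (intro exI[of _ d] conjI allI impI ballI d(1))
        fix y :: "real^'n" assume y: "norm (y - 0) < d"
        show "\<exists>x. x 0 = y \<and> solves_on F x {0..}"
          using exist yi[OF y] d by (meson less_le_trans)
        fix x b t assume xb: "x 0 = y \<and> solves_on F x {0..<b}" and t: "t \<in> {0..<b}"
        have "\<forall>i. \<bar>x t $ i\<bar> < d" using bound[OF d(1) d(2) _ conjunct2[OF xb]] xb yi[OF y] t by blast
        then have "norm (x t) \<le> real CARD('n) * d" by (rule normb)
        with de show "norm (x t - 0) < e" by simp
      qed
    qed
    have attr: "attractive F 0"
      unfolding attractive_def
    proof (intro exI[of _ "1/2"] conjI allI impI)
      fix x :: "real \<Rightarrow> real^'n" assume xa: "solves_on F x {0..} \<and> norm (x 0 - 0) < 1/2"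
      define \<beta> where "\<beta> t = 1/2 / sqrt (1 + c*(1/2)^2/2 * t)" for t :: real
      have xb: "\<forall>i. \<bar>x t $ i\<bar> < \<beta> t" if t: "t \<ge> 0" for t
      proof -
        have s: "solves_on F x {0..<t+1}" by (rule solves_on_subset[of F x "{0..}"]) (use xa in auto)
        show ?thesis using barrier[OF ac cpos w eps HF _ _ _ s, of "1/2"] yi[of "x 0" "1/2"] xa t
          by (simp add: \<beta>_def)
      qed
      have ev: "\<forall>\<^sub>F t in at_top. norm (x t) \<le> real CARD('n) * \<beta> t"
        using eventually_ge_at_top[of "0::real"] by eventually_elim (rule normb[OF xb])
      have "(\<beta> \<longlongrightarrow> 0) at_top" unfolding \<beta>_def using cpos by real_asymp
      then have "((\<lambda>t. real CARD('n) * \<beta> t) \<longlongrightarrow> 0) at_top"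
        by (rule tendsto_mult_right_zero)
      then show "(x \<longlongrightarrow> 0) at_top" by (rule Lim_null_comparison[OF ev])
    qed simp
    show "locally_asymptotically_stable (node_field a w \<epsilon>) 0"
      using F0 stab attr by (simp add: locally_asymptotically_stable_def F_def)
  qed
qed

end
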